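(* Let $(G,I,O)$ be a geometry with a flow $(f,\preceq)$, and let $P_h=v_1\to\cdots\to v_{r}$ and $P_j=w_1\to\cdots\to w_{s}$ be two distinct paths of the path cover $\mathcal P_f$ (whose arcs are exactly the arcs $v\to f(v)$, $v\in O^c$). If $v_aw_b\in E(G)$ and $v_cw_d\in E(G)$ with $a<c$, then $b\le d$.
   Context: Graphs are finite, simple, undirected, without self-loops; $v\sim w$ denotes adjacency. A geometry is $(G,I,O)$ with $I,O\subseteq V(G)$; $O^c=V(G)\setminus O$, $I^c=V(G)\setminus I$. A flow for $(G,I,O)$ is a pair $(f,\preceq)$, $f:O^c\to I^c$, $\preceq$ a partial order on $V(G)$, with, for all $v\in O^c$, $w\in V(G)$: $v\sim f(v)$; $v\preceq f(v)$; $w\sim f(v)\Rightarrow v\preceq w$. For a flow, $f$ is injective and the arcs $v\to f(v)$ ($v\in O^c$) form a family $\mathcal P_f$ of vertex-disjoint directed paths covering $V(G)$, each ending in $O$. *)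

theory Defs
  imports Main
begin

definition simple_graph :: "'a set \<Rightarrow> ('a \<Rightarrow> 'a \<Rightarrow> bool) \<Rightarrow> bool" where
  "simple_graph V E \<longleftrightarrow> finite V \<and> (\<forall>v w. E v w \<longrightarrow> v \<in> V \<and> w \<in> V)
     \<and> (\<forall>v w. E v w \<longrightarrow> E w v) \<and> (\<forall>v. \<not> E v v)"

definition geometry :: "'a set \<Rightarrow> ('a \<Rightarrow> 'a \<Rightarrow> bool) \<Rightarrow> 'a set \<Rightarrow> 'a set \<Rightarrow> bool" where
  "geometry V E Inp Out \<longleftrightarrow> simple_graph V E \<and> Inp \<subseteq> V \<and> Out \<subseteq> V"

definition is_flow :: "'a set \<Rightarrow> ('a \<Rightarrow> 'a \<Rightarrow> bool) \<Rightarrow> 'a set \<Rightarrow> 'a set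
     \<Rightarrow> ('a \<Rightarrow> 'a) \<Rightarrow> 'a rel \<Rightarrow> bool" where
  "is_flow V E Inp Out f le \<longleftrightarrow>
     partial_order_on V le \<and>
     (\<forall>v \<in> V - Out. f v \<in> V - Inp) \<and>
     (\<forall>v \<in> V - Out. E v (f v)) \<and>
     (\<forall>v \<in> V - Out. (v, f v) \<in> le) \<and>
     (\<forall>v \<in> V - Out. \<forall>w \<in> V. E w (f v) \<longrightarrow> (v, w) \<in> le)"

text \<open>A path of the path cover P_f: a maximal directed path in the digraph with
  arcs v \<rightarrow> f v (v \<in> Out^c), listed from its first vertex to its last. Indices are 0-based.\<close>
definition flow_path :: "'a set \<Rightarrow> 'a set \<Rightarrow> ('a \<Rightarrow> 'a) \<Rightarrow> 'a list \<Rightarrow> bool" where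
  "flow_path V Out f P \<longleftrightarrow>
     P \<noteq> [] \<and> set P \<subseteq> V \<and>
     (\<forall>i. Suc i < length P \<longrightarrow> P ! i \<in> V - Out \<and> P ! Suc i = f (P ! i)) \<and>
     hd P \<notin> f ` (V - Out) \<and> last P \<in> Out"

end

theory Submission
  imports Defs
begin

lemma flow_inj:
  assumes "is_flow V E Inp Out f le" "u \<in> V - Out" "v \<in> V - Out" "f u = f v"
  shows "u = v"
proof -
  have po: "partial_order_on V le" using assms(1) unfolding is_flow_def by blast
  have "E u (f v)" "E v (f u)" using assms unfolding is_flow_def by (metis DiffI DiffD1 DiffD2)+
  hence "(v,u) \<in> le" "(u,v) \<in> le" using assms unfolding is_flow_def by auto
  thus ?thesis using po unfolding partial_order_on_def antisym_def by blast
qed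

lemma path_step:
  assumes "flow_path V Out f P" "Suc i < length P"
  shows "P ! i \<in> V - Out" "P ! Suc i = f (P ! i)"
  using assms unfolding flow_path_def by auto

lemma path_chain:
  assumes "is_flow V E Inp Out f le" "flow_path V Out f P" "i \<le> j" "j < length P"
  shows "(P ! i, P ! j) \<in> le"
  using assms(3,4)
proof (induction j)
  case 0
  have po: "partial_order_on V le" using assms(1) unfolding is_flow_def by blast
  have "P ! 0 \<in> V" using assms(2) 0 unfolding flow_path_def by auto
  thus ?case using 0 po unfolding partial_order_on_def preorder_on_def refl_on_def by auto
next
  case (Suc j)
  have po: "partial_order_on V le" using assms(1) unfolding is_flow_def by blast
  show ?case
  proof (cases "i = Suc j")
    case True
    have "P ! i \<in> V" using assms(2) Suc unfolding flow_path_def by auto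
    thus ?thesis using True po unfolding partial_order_on_def preorder_on_def refl_on_def by auto
  next
    case False
    hence "(P ! i, P ! j) \<in> le" using Suc by auto
    moreover have "(P ! j, P ! Suc j) \<in> le"
      using path_step[OF assms(2) Suc.prems(2)] assms(1) unfolding is_flow_def by auto
    ultimately show ?thesis using po unfolding partial_order_on_def preorder_on_def trans_def by blast
  qed
qed

lemma path_strict:
  assumes "geometry V E Inp Out" "is_flow V E Inp Out f le" "flow_path V Out f P"
    "i < j" "j < length P" "(P ! j, P ! i) \<in> le"
  shows False
proof -
  have po: "partial_order_on V le" using assms(2) unfolding is_flow_def by blast
  have s: "P ! i \<in> V - Out" "P ! Suc i = f (P ! i)" using path_step[OF assms(3)] assms(4,5) by auto
  have e: "E (P ! i) (P ! Suc i)" using s assms(2) unfolding is_flow_def by auto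
  have "(P ! i, P ! Suc i) \<in> le" using s assms(2) unfolding is_flow_def by auto
  moreover have "(P ! Suc i, P ! j) \<in> le" using path_chain[OF assms(2,3)] assms(4,5) by auto
  ultimately have "(P ! Suc i, P ! i) \<in> le" using assms(6) po
    unfolding partial_order_on_def preorder_on_def trans_def by blast
  hence "P ! Suc i = P ! i" using \<open>(P ! i, P ! Suc i) \<in> le\<close> po
    unfolding partial_order_on_def antisym_def by blast
  thus False using e assms(1) unfolding geometry_def simple_graph_def by metis
qed

lemma path_back:
  assumes "is_flow V E Inp Out f le" "flow_path V Out f P" "flow_path V Out f Q"
  shows "i < length P \<Longrightarrow> j < length Q \<Longrightarrow> P ! i = Q ! j \<Longrightarrow> i = j \<and> (\<forall>k\<le>i. P ! k = Q ! k)"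
proof (induction i arbitrary: j)
  case 0
  show ?case
  proof (cases j)
    case (Suc j')
    have "Q ! j = f (Q ! j')" "Q ! j' \<in> V - Out" using path_step[OF assms(3)] Suc 0 by auto
    hence "hd P \<in> f ` (V - Out)" using 0 assms(2) unfolding flow_path_def by (auto simp: hd_conv_nth)
    thus ?thesis using assms(2) unfolding flow_path_def by blast
  qed (use 0 in auto)
next
  case (Suc i)
  show ?case
  proof (cases j)
    case 0
    have "P ! Suc i = f (P ! i)" "P ! i \<in> V - Out" using path_step[OF assms(2)] Suc by auto
    hence "hd Q \<in> f ` (V - Out)" using Suc.prems 0 assms(3) unfolding flow_path_def by (auto simp: hd_conv_nth)
    thus ?thesis using assms(3) unfolding flow_path_def by blast
  next
    case (Suc j')
    have a: "P ! Suc i = f (P ! i)" "P ! i \<in> V - Out" using path_step[OF assms(2)] Suc.prems by auto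
    have b: "Q ! j = f (Q ! j')" "Q ! j' \<in> V - Out" using path_step[OF assms(3)] Suc Suc.prems by auto
    have "P ! i = Q ! j'" using flow_inj[OF assms(1) a(2) b(2)] a b Suc.prems by auto
    hence "i = j' \<and> (\<forall>k\<le>i. P ! k = Q ! k)" using Suc.IH[of j'] Suc.prems Suc by auto
    thus ?thesis using Suc Suc.prems by (auto simp: le_Suc_eq)
  qed
qed

lemma path_fwd:
  assumes "flow_path V Out f P" "flow_path V Out f Q" "P ! i = Q ! i"
  shows "i \<le> k \<Longrightarrow> k < length P \<Longrightarrow> k < length Q \<Longrightarrow> P ! k = Q ! k"
proof (induction k)
  case 0 thus ?case using assms by auto
next
  case (Suc k)
  show ?case
  proof (cases "i = Suc k")
    case True thus ?thesis using assms by auto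
  next
    case False
    thus ?thesis using Suc path_step[OF assms(1), of k] path_step[OF assms(2), of k] by auto
  qed
qed

lemma path_share:
  assumes "is_flow V E Inp Out f le" "flow_path V Out f P" "flow_path V Out f Q"
    "i < length P" "j < length Q" "P ! i = Q ! j"
  shows "P = Q"
proof -
  from path_back[OF assms(1-3) assms(4-6)] have ij: "i = j" and lo: "\<forall>k\<le>i. P ! k = Q ! k" by auto
  have hi: "\<And>k. i \<le> k \<Longrightarrow> k < length P \<Longrightarrow> k < length Q \<Longrightarrow> P ! k = Q ! k"
    using path_fwd[OF assms(2,3)] assms(6) ij by auto
  have len: "length P = length Q"
  proof (rule ccontr)
    assume "length P \<noteq> length Q"
    then consider "length P < length Q" | "length Q < length P" by linarith
    thus False
    proof cases
      case 1
      let ?k = "length P - 1"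
      have "P ! ?k = Q ! ?k" using hi assms(4) 1 by auto
      moreover have "P ! ?k = last P" using assms(2) unfolding flow_path_def by (simp add: last_conv_nth)
      moreover have "Q ! ?k \<in> V - Out" using path_step[OF assms(3), of ?k] 1 assms(4) by auto
      ultimately show False using assms(2) unfolding flow_path_def by auto
    next
      case 2
      let ?k = "length Q - 1"
      have "P ! ?k = Q ! ?k" using hi assms(5) ij 2 by auto
      moreover have "Q ! ?k = last Q" using assms(3) unfolding flow_path_def by (simp add: last_conv_nth)
      moreover have "P ! ?k \<in> V - Out" using path_step[OF assms(2), of ?k] 2 assms(5) by auto
      ultimately show False using assms(3) unfolding flow_path_def by auto
    qed
  qed
  show ?thesis
  proof (rule nth_equalityI)
    fix k assume "k < length P"
    thus "P ! k = Q ! k" using lo hi len by (cases "k \<le> i") auto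
  qed (rule len)
qed

theorem mainTheorem7:
  fixes V :: "'a set" and E :: "'a \<Rightarrow> 'a \<Rightarrow> bool" and Inp Out :: "'a set"
    and f :: "'a \<Rightarrow> 'a" and le :: "'a rel" and P Q :: "'a list"
    and a b c d :: nat
  assumes "geometry V E Inp Out"
    and "is_flow V E Inp Out f le"
    and "flow_path V Out f P" and "flow_path V Out f Q" and "P \<noteq> Q"
    and "a < length P" and "c < length P" and "b < length Q" and "d < length Q"
    and "E (P ! a) (Q ! b)" and "E (P ! c) (Q ! d)"
    and "a < c"
  shows "b \<le> d"
proof (rule ccontr)
  assume "\<not> b \<le> d"
  hence db: "d < b" by simp
  have po: "partial_order_on V le" using assms(2) unfolding is_flow_def by blast
  have sym: "\<And>x y. E x y \<Longrightarrow> E y x" and inV: "\<And>x y. E x y \<Longrightarrow> x \<in> V \<and> y \<in> V"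
    using assms(1) unfolding geometry_def simple_graph_def by blast+
  have q: "Q ! b = f (Q ! (b-1))" "Q ! (b-1) \<in> V - Out"
    using path_step[OF assms(4), of "b-1"] db assms(8) by auto
  have p: "P ! c = f (P ! (c-1))" "P ! (c-1) \<in> V - Out"
    using path_step[OF assms(3), of "c-1"] assms(12,7) by auto
  have l1: "(Q ! (b-1), P ! a) \<in> le"
  proof -
    have "\<forall>w\<in>V. E w (f (Q ! (b-1))) \<longrightarrow> (Q ! (b-1), w) \<in> le" using assms(2) q unfolding is_flow_def by blast
    thus ?thesis using q inV[OF assms(10)] assms(10) by auto
  qed
  have l2: "(P ! (c-1), Q ! d) \<in> le"
  proof -
    have "\<forall>w\<in>V. E w (f (P ! (c-1))) \<longrightarrow> (P ! (c-1), w) \<in> le" using assms(2) p unfolding is_flow_def by blast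
    thus ?thesis using p inV[OF assms(11)] sym[OF assms(11)] by auto
  qed
  have l3: "(P ! a, P ! (c-1)) \<in> le" using path_chain[OF assms(2,3)] assms(12,7) by auto
  have l4: "(Q ! d, Q ! (b-1)) \<in> le" using path_chain[OF assms(2,4)] db assms(8) by auto
  have tr: "trans le" using po unfolding partial_order_on_def preorder_on_def by blast
  have d1: "d = b - 1"
  proof (rule ccontr)
    assume "d \<noteq> b - 1"
    hence "d < b - 1" using db by simp
    moreover have "(Q ! (b-1), Q ! d) \<in> le" using l1 l3 l2 tr unfolding trans_def by blast
    ultimately show False using path_strict[OF assms(1,2,4), of d "b-1"] assms(8) by linarith
  qed
  have "(Q ! d, P ! a) \<in> le" using l1 d1 by simp
  moreover have "(P ! a, Q ! d) \<in> le" using l3 l2 tr unfolding trans_def by blast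
  ultimately have "P ! a = Q ! d" using po unfolding partial_order_on_def antisym_def by blast
  hence "P = Q" using path_share[OF assms(2,3,4)] assms(6,9) by blast
  thus False using assms(5) by simp
qed

end
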